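(* For an information-lossless FS encoder with side information, the joint spectral radius of its family of Kraft matrices satisfies $\rho_{\mathrm{JSR}}(\mathcal{K})\le 1$.
   Context: Let $\mathcal{X}$ be a finite source alphabet, $\mathcal{W}$ a finite side-information alphabet, $\mathcal{Z}$ a finite set of $s$ states, and $\mathcal{Y}$ a finite set of binary strings (possibly including the empty string). An FS encoder with side information is given by an output function $f:\mathcal{Z}\times\mathcal{X}\times\mathcal{W}\to\mathcal{Y}$ and a next-state function $g:\mathcal{Z}\times\mathcal{X}\times\mathcal{W}\to\mathcal{Z}$. Given an initial state $z_1=z$, source symbols $x^n$ and side information $w^n$, it produces $y_i=f(z_i,x_i,w_i)$ and $z_{i+1}=g(z_i,x_i,w_i)$; write $g(z,x^n,w^n)=z_{n+1}$, let $f(z,x^n,w^n)$ be the concatenation of $y_1,\dots,y_n$ as a binary string, and $L[f(z,x^n,w^n)]=\sum_{i=1}^n L(y_i)$ where $L$ is string length. The encoder is information lossless with side information if for every $n$, the quadruple $(z_1, f(z_1,x^n,w^n), w^n, z_{n+1})$ uniquely determines $x^n\in\mathcal{X}^n$. For each $w\in\mathcal{W}$, the Kraft matrix $K(w)$ is the $s\times s$ nonnegative matrix with $[K(w)]_{zz'}=\sum_{\{x\in\mathcal{X}:\ g(z,x,w)=z'\}}2^{-L[f(z,x,w)]}$; for $w^n\in\mathcal{W}^n$, $K(w^n)=K(w_1)K(w_2)\cdots K(w_n)$; and $\mathcal{K}=\{K(w):w\in\mathcal{W}\}$. The joint spectral radius is $\rho_{\mathrm{JSR}}(\mathcal{K})=\lim_{n\to\infty}\max_{w^n\in\mathcal{W}^n}\|K(w^n)\|^{1/n}$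 for any matrix norm $\|\cdot\|$. *)

theory Defs
  imports "HOL-Analysis.Analysis"
begin

(* FS encoder with side information: states 'z, source symbols 'x, side information 'w
   (all finite types). *)

fun fs_out :: "('z \<Rightarrow> 'x \<Rightarrow> 'w \<Rightarrow> bool list) \<Rightarrow> ('z \<Rightarrow> 'x \<Rightarrow> 'w \<Rightarrow> 'z)
                \<Rightarrow> 'z \<Rightarrow> 'x list \<Rightarrow> 'w list \<Rightarrow> bool list" where
  "fs_out f g z (x # xs) (w # ws) = f z x w @ fs_out f g (g z x w) xs ws"
| "fs_out f g z _ _ = []"

fun fs_state :: "('z \<Rightarrow> 'x \<Rightarrow> 'w \<Rightarrow> bool list) \<Rightarrow> ('z \<Rightarrow> 'x \<Rightarrow> 'w \<Rightarrow> 'z)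
                \<Rightarrow> 'z \<Rightarrow> 'x list \<Rightarrow> 'w list \<Rightarrow> 'z" where
  "fs_state f g z (x # xs) (w # ws) = fs_state f g (g z x w) xs ws"
| "fs_state f g z _ _ = z"

definition info_lossless_si ::
  "('z \<Rightarrow> 'x \<Rightarrow> 'w \<Rightarrow> bool list) \<Rightarrow> ('z \<Rightarrow> 'x \<Rightarrow> 'w \<Rightarrow> 'z) \<Rightarrow> bool" where
  "info_lossless_si f g \<longleftrightarrow>
     (\<forall>n z xs xs' ws. length xs = n \<and> length xs' = n \<and> length ws = n \<and>
        fs_out f g z xs ws = fs_out f g z xs' ws \<and>
        fs_state f g z xs ws = fs_state f g z xs' ws \<longrightarrow> xs = xs')"

definition kraft_matrix ::
  "('z::finite \<Rightarrow> 'x::finite \<Rightarrow> 'w \<Rightarrow> bool list) \<Rightarrow> ('z \<Rightarrow> 'x \<Rightarrow> 'w \<Rightarrow> 'z) \<Rightarrow> 'w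
     \<Rightarrow> real ^ 'z ^ 'z" where
  "kraft_matrix f g w = (\<chi> z z'. \<Sum>x\<in>{x. g z x w = z'}. (1/2::real) ^ length (f z x w))"

definition kraft_prod ::
  "('z::finite \<Rightarrow> 'x::finite \<Rightarrow> 'w \<Rightarrow> bool list) \<Rightarrow> ('z \<Rightarrow> 'x \<Rightarrow> 'w \<Rightarrow> 'z) \<Rightarrow> 'w list
     \<Rightarrow> real ^ 'z ^ 'z" where
  "kraft_prod f g ws = foldr (\<lambda>w M. kraft_matrix f g w ** M) ws (mat 1)"

text \<open>n-th term max_{w^n} ||K(w^n)||^(1/n); the matrix norm used is the Frobenius norm
  (the library norm on real^'z^'z).\<close>
definition jsr_seq ::
  "('z::finite \<Rightarrow> 'x::finite \<Rightarrow> 'w::finite \<Rightarrow> bool list) \<Rightarrow> ('z \<Rightarrow> 'x \<Rightarrow> 'w \<Rightarrow> 'z) \<Rightarrow> nat \<Rightarrow> real" where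
  "jsr_seq f g n = Max ((\<lambda>ws. norm (kraft_prod f g ws) powr (1 / real n)) ` {ws. length ws = n})"

definition jsr ::
  "('z::finite \<Rightarrow> 'x::finite \<Rightarrow> 'w::finite \<Rightarrow> bool list) \<Rightarrow> ('z \<Rightarrow> 'x \<Rightarrow> 'w \<Rightarrow> 'z) \<Rightarrow> real" where
  "jsr f g = lim (jsr_seq f g)"

end

theory Submission
  imports Defs "HOL-Real_Asymp.Real_Asymp"
begin


lemma norm_sq_vec: "(norm (x::real^'n))^2 = (\<Sum>i\<in>UNIV. (x$i)^2)"
  by (simp only: power2_norm_eq_inner) (simp add: inner_vec_def power2_eq_square)

lemma norm_sq_mat: "(norm (A::real^'n^'m))^2 = (\<Sum>i\<in>UNIV. \<Sum>j\<in>UNIV. (A$i$j)^2)"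
  by (simp only: power2_norm_eq_inner) (simp add: inner_vec_def power2_eq_square)

lemma frob_submult: "norm ((A::real^'n^'m) ** (B::real^'k^'n)) \<le> norm A * norm B"
proof -
  have "(norm (A ** B))^2 = (\<Sum>i\<in>UNIV. \<Sum>k\<in>UNIV. (\<Sum>j\<in>UNIV. A$i$j * B$j$k)^2)"
    by (simp add: norm_sq_mat matrix_matrix_mult_def)
  also have "\<dots> \<le> (\<Sum>i\<in>UNIV. \<Sum>k\<in>UNIV. (\<Sum>j\<in>UNIV. (A$i$j)^2) * (\<Sum>j\<in>UNIV. (B$j$k)^2))"
    by (intro sum_mono Cauchy_Schwarz_ineq_sum)
  also have "\<dots> = (\<Sum>i\<in>UNIV. \<Sum>j\<in>UNIV. (A$i$j)^2) * (\<Sum>k\<in>UNIV. \<Sum>j\<in>UNIV. (B$j$k)^2)"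
    by (simp add: sum_product)
  also have "(\<Sum>k\<in>UNIV. \<Sum>j\<in>UNIV. (B$j$k)^2) = (norm B)^2"
    by (subst sum.swap) (simp add: norm_sq_mat)
  also have "(\<Sum>i\<in>UNIV. \<Sum>j\<in>UNIV. (A$i$j)^2) = (norm A)^2"
    by (simp add: norm_sq_mat)
  finally have "(norm (A ** B))^2 \<le> (norm A * norm B)^2" by (simp add: power_mult_distrib)
  then show ?thesis
    by (meson norm_ge_zero power2_le_imp_le mult_nonneg_nonneg)
qed

lemma lim_root_const: "(D::real) > 0 \<Longrightarrow> (\<lambda>n. D powr (1 / real n)) \<longlonglongrightarrow> 1"
proof -
  assume "D > 0"
  have "(\<lambda>n. D powr (1 / real n)) \<longlonglongrightarrow> D powr 0"
    by (intro tendsto_powr tendsto_const lim_1_over_n) (use \<open>D > 0\<close> in auto)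
  then show ?thesis using \<open>D > 0\<close> by simp
qed



lemma fekete_root:
  fixes a :: "nat \<Rightarrow> real"
  assumes nn: "\<And>n. a n \<ge> 0" and sub: "\<And>m n. a (m+n) \<le> a m * a n"
  shows "(\<lambda>n. a n powr (1/real n)) \<longlonglongrightarrow> Inf ((\<lambda>n. a n powr (1/real n)) ` {1..})"
proof -
  define s where "s = (\<lambda>n. a n powr (1/real n))"
  define L where "L = Inf (s ` {1..})"
  have s0: "s n \<ge> 0" for n by (simp add: s_def)
  have bdd: "bdd_below (s ` {1..})" by (rule bdd_belowI[where m=0]) (use s0 in auto)
  have sL: "n \<ge> 1 \<Longrightarrow> L \<le> s n" for n unfolding L_def by (rule cInf_lower) (use bdd in auto)
  have L0: "L \<ge> 0" unfolding L_def by (rule cInf_greatest) (use s0 in auto)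
  have "s \<longlonglongrightarrow> L"
  proof (rule order_tendstoI)
    fix y assume "y < L"
    then show "eventually (\<lambda>n. y < s n) sequentially"
      using sL by (intro eventually_sequentiallyI[of 1]) (auto intro: less_le_trans)
  next
    fix y assume yL: "L < y"
    define x where "x = (L + y) / 2"
    have Lx: "L < x" and xy: "x < y" and x0: "x > 0" using yL L0 by (auto simp: x_def)
    obtain m where m1: "m \<ge> 1" and smx: "s m < x"
      using cInf_lessD[of "s ` {1..}" x] Lx unfolding L_def by auto
    have am: "a m \<le> x ^ m"
    proof (cases "a m = 0")
      case True then show ?thesis using x0 by simp
    next
      case False
      then have apos: "a m > 0" using nn[of m] by simp
      have "(s m) ^ m = a m"
        using apos m1 by (simp add: s_def powr_realpow[symmetric] powr_powr)
      moreover have "(s m) ^ m \<le> x ^ m" using smx s0[of m] by (intro power_mono) auto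
      ultimately show ?thesis by simp
    qed
    define C where "C = 1 + (\<Sum>r<m. a r)"
    have C1: "C \<ge> 1" using nn by (simp add: C_def sum_nonneg)
    have key: "r < m \<Longrightarrow> a (q*m + r) \<le> x^(q*m) * C" for q r
    proof (induction q)
      case 0
      have "a r \<le> (\<Sum>r<m. a r)" using 0 nn by (intro member_le_sum) auto
      then show ?case by (simp add: C_def)
    next
      case (Suc q)
      have "a (Suc q * m + r) = a (m + (q*m + r))" by (simp add: algebra_simps)
      also have "\<dots> \<le> a m * a (q*m + r)" by (rule sub)
      also have "\<dots> \<le> x^m * (x^(q*m) * C)"
        using Suc am nn x0 by (intro mult_mono) auto
      also have "\<dots> = x^(Suc q * m) * C" by (simp add: power_add)
      finally show ?case .
    qed
    define e where "e = min 1 x"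
    have e0: "e > 0" and e1: "e \<le> 1" and ex: "e \<le> x" using x0 by (auto simp: e_def)
    define D where "D = C / e^m"
    have D0: "D > 0" using C1 e0 by (simp add: D_def)
    have aD: "a n \<le> x^n * D" for n
    proof -
      define q r where "q = n div m" and "r = n mod m"
      have nqr: "n = q*m + r" by (simp add: q_def r_def)
      have rm: "r < m" using m1 by (simp add: r_def)
      have "e^m \<le> e^r" using e0 e1 rm by (intro power_decreasing) auto
      also have "e^r \<le> x^r" using e0 ex by (intro power_mono) auto
      finally have erx: "e^m \<le> x^r" .
      have "a n \<le> x^(q*m) * C" using key[OF rm] nqr by simp
      also have "x^(q*m) * C \<le> x^(q*m) * C * (x^r / e^m)"
      proof -
        have q1: "1 \<le> x^r / e^m" using erx e0 by simp
        have "x^(q*m) * C * 1 \<le> x^(q*m) * C * (x^r / e^m)"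
          by (rule mult_left_mono[OF q1]) (use x0 C1 in auto)
        then show ?thesis by simp
      qed
      also have "\<dots> = x^n * D" by (simp add: nqr power_add D_def)
      finally show ?thesis .
    qed
    have "eventually (\<lambda>n. D powr (1 / real n) < y / x) sequentially"
      using lim_root_const[OF D0] xy x0 by (intro order_tendstoD(2)) (auto simp: field_simps)
    then show "eventually (\<lambda>n. s n < y) sequentially"
    proof (rule eventually_mono[OF eventually_conj[OF _ eventually_ge_at_top[of 1]]], safe)
      fix n :: nat assume n1: "n \<ge> 1" and Dn: "D powr (1 / real n) < y / x"
      have "s n \<le> (x^n * D) powr (1/real n)"
        unfolding s_def using aD nn by (intro powr_mono2) auto
      also have "\<dots> = (x^n) powr (1/real n) * D powr (1/real n)"
        using x0 D0 by (simp add: powr_mult)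
      also have "(x^n) powr (1/real n) = x"
        using x0 n1 by (simp add: powr_realpow[symmetric] powr_powr)
      also have "x * D powr (1/real n) < x * (y / x)" using mult_strict_left_mono[OF Dn x0] by simp
      also have "\<dots> = y" using x0 by simp
      finally show "s n < y" .
    qed
  qed
  then show ?thesis by (simp add: s_def L_def)
qed


lemma lim_root_lin: "(c::real) > 0 \<Longrightarrow> (\<lambda>n. (c * (real n + 1)) powr (1 / real n)) \<longlonglongrightarrow> 1"
  by real_asymp


lemma kraft_prod_append:
  "kraft_prod f g (xs @ ys) = kraft_prod f g xs ** kraft_prod f g ys"
  by (induction xs) (simp_all add: kraft_prod_def matrix_mul_assoc matrix_mul_lid)

lemma finite_len: "finite {ws :: 'a::finite list. length ws = n}"
  using finite_lists_length_eq[OF finite_class.finite_UNIV, of n] by simp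

lemma fs_out_len:
  fixes f :: "'z::finite \<Rightarrow> 'x::finite \<Rightarrow> 'w::finite \<Rightarrow> bool list"
  defines "Lm \<equiv> Max (range (\<lambda>(z,x,w). length (f z x w)))"
  shows "length (fs_out f g z xs ws) \<le> length xs * Lm"
proof (induction xs arbitrary: z ws)
  case Nil then show ?case by simp
next
  case (Cons x xs)
  show ?case
  proof (cases ws)
    case Nil then show ?thesis by simp
  next
    case (Cons w ws')
    have "length (f z x w) \<le> Lm"
      unfolding Lm_def by (rule Max_ge) (auto intro!: image_eqI[where x="(z,x,w)"])
    then show ?thesis using Cons.IH[of "g z x w" ws'] Cons by simp
  qed
qed

lemma sum_half_len_le:
  fixes U :: "bool list set"
  assumes "\<And>u. u \<in> U \<Longrightarrow> length u \<le> M"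
  shows "(\<Sum>u\<in>U. (1/2::real) ^ length u) \<le> real M + 1"
proof -
  define T where "T = {u :: bool list. length u \<le> M}"
  have fT: "finite T" unfolding T_def
    using finite_lists_length_le[OF finite_class.finite_UNIV, of M] by (simp add: subset_UNIV)
  have OT: "U \<subseteq> T" using assms by (auto simp: T_def)
  have "(\<Sum>u\<in>U. (1/2::real) ^ length u) \<le> (\<Sum>u\<in>T. (1/2::real) ^ length u)"
    by (rule sum_mono2[OF fT OT]) auto
  also have "\<dots> = (\<Sum>k\<in>{..M}. \<Sum>u\<in>{u\<in>T. length u = k}. (1/2::real) ^ length u)"
    by (rule sum.group[symmetric, OF fT]) (auto simp: T_def)
  also have "\<dots> = (\<Sum>k\<in>{..M}. (1::real))"
  proof (rule sum.cong[OF refl])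
    fix k assume "k \<in> {..M}"
    then have eq: "{u\<in>T. length u = k} = {u. set u \<subseteq> (UNIV::bool set) \<and> length u = k}"
      by (auto simp: T_def)
    have "(\<Sum>u\<in>{u\<in>T. length u = k}. (1/2::real) ^ length u) = (\<Sum>u\<in>{u\<in>T. length u = k}. (1/2::real) ^ k)"
      by (rule sum.cong) auto
    also have "\<dots> = real (card {u. set u \<subseteq> (UNIV::bool set) \<and> length u = k}) * (1/2)^k"
      by (simp add: eq)
    also have "\<dots> = 1" using card_lists_length_eq[of "UNIV::bool set" k] by (simp add: power_one_over)
    finally show "(\<Sum>u\<in>{u\<in>T. length u = k}. (1/2::real) ^ length u) = 1" .
  qed
  also have "\<dots> = real M + 1" by simp
  finally show ?thesis .
qed

lemma kraft_prod_entry: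
  fixes f :: "'z::finite \<Rightarrow> 'x::finite \<Rightarrow> 'w \<Rightarrow> bool list"
  shows "kraft_prod f g ws $ z $ z' = (\<Sum>xs\<in>{xs. length xs = length ws \<and> fs_state f g z xs ws = z'}.
            (1/2::real) ^ length (fs_out f g z xs ws))"
proof (induction ws arbitrary: z)
  case Nil
  have "{xs. length xs = 0 \<and> fs_state f g z xs [] = z'} = (if z = z' then {[]} else {})" by auto
  then show ?case by (simp add: kraft_prod_def mat_def)
next
  case (Cons w ws)
  define S where "S u = {xs. length xs = length ws \<and> fs_state f g u xs ws = z'}" for u
  define h where "h u xs = (1/2::real) ^ length (fs_out f g u xs ws)" for u xs
  define c where "c x = (1/2::real) ^ length (f z x w)" for x
  have fS: "finite (S u)" for u
    unfolding S_def by (rule finite_subset[OF _ finite_len[of "length ws"]]) auto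
  have "kraft_prod f g (w # ws) $ z $ z' =
        (\<Sum>u\<in>UNIV. kraft_matrix f g w $ z $ u * kraft_prod f g ws $ u $ z')"
    by (simp add: kraft_prod_def matrix_matrix_mult_def)
  also have "\<dots> = (\<Sum>u\<in>UNIV. (\<Sum>x\<in>{x. g z x w = u}. c x) * (\<Sum>xs\<in>S u. h u xs))"
    by (simp add: Cons.IH kraft_matrix_def c_def S_def h_def)
  also have "\<dots> = (\<Sum>u\<in>UNIV. \<Sum>x\<in>{x\<in>UNIV. g z x w = u}. c x * (\<Sum>xs\<in>S (g z x w). h (g z x w) xs))"
    by (simp add: sum_distrib_right)
  also have "\<dots> = (\<Sum>x\<in>UNIV. c x * (\<Sum>xs\<in>S (g z x w). h (g z x w) xs))"
    by (rule sum.group) auto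
  also have "\<dots> = (\<Sum>x\<in>UNIV. \<Sum>xs\<in>S (g z x w). c x * h (g z x w) xs)"
    by (simp add: sum_distrib_left)
  also have "\<dots> = (\<Sum>(x,xs)\<in>Sigma UNIV (\<lambda>x. S (g z x w)). c x * h (g z x w) xs)"
    by (rule sum.Sigma) (auto simp: fS)
  also have "\<dots> = (\<Sum>(x,xs)\<in>Sigma UNIV (\<lambda>x. S (g z x w)). (1/2::real) ^ length (fs_out f g z (x # xs) (w # ws)))"
    by (rule sum.cong) (auto simp: c_def h_def power_add)
  also have "\<dots> = (\<Sum>ys\<in>(\<lambda>(x,xs). x # xs) ` Sigma UNIV (\<lambda>x. S (g z x w)). (1/2::real) ^ length (fs_out f g z ys (w # ws)))"
    by (subst sum.reindex) (auto simp: inj_on_def intro!: sum.cong)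
  also have "(\<lambda>(x,xs). x # xs) ` Sigma UNIV (\<lambda>x. S (g z x w)) =
      {xs. length xs = length (w # ws) \<and> fs_state f g z xs (w # ws) = z'}"
  proof (rule set_eqI, rule iffI)
    fix ys assume "ys \<in> {xs. length xs = length (w # ws) \<and> fs_state f g z xs (w # ws) = z'}"
    then obtain x xs where "ys = x # xs" "length xs = length ws" "fs_state f g (g z x w) xs ws = z'"
      by (cases ys) auto
    then show "ys \<in> (\<lambda>(x,xs). x # xs) ` Sigma UNIV (\<lambda>x. S (g z x w))"
      by (auto simp: S_def intro!: image_eqI[where x="(x, xs)"])
  qed (auto simp: S_def)
  finally show ?case .
qed

lemma entry_bound:
  fixes f :: "'z::finite \<Rightarrow> 'x::finite \<Rightarrow> 'w::finite \<Rightarrow> bool list"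
  assumes IL: "info_lossless_si f g"
  shows "kraft_prod f g ws $ z $ z' \<le> real (length ws * Max (range (\<lambda>(z,x,w). length (f z x w)))) + 1"
proof -
  define Lm where "Lm = Max (range (\<lambda>(z,x,w). length (f z x w)))"
  define S where "S = {xs. length xs = length ws \<and> fs_state f g z xs ws = z'}"
  define out where "out xs = fs_out f g z xs ws" for xs
  have inj: "inj_on out S"
    using IL unfolding info_lossless_si_def inj_on_def S_def out_def
    by (metis (mono_tags, lifting) mem_Collect_eq)
  have "kraft_prod f g ws $ z $ z' = (\<Sum>xs\<in>S. (1/2::real) ^ length (out xs))"
    by (simp add: kraft_prod_entry S_def out_def)
  also have "\<dots> = (\<Sum>u\<in>out ` S. (1/2::real) ^ length u)"
    by (simp add: sum.reindex[OF inj])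
  also have "\<dots> \<le> real (length ws * Lm) + 1"
  proof (rule sum_half_len_le)
    fix u assume "u \<in> out ` S"
    then obtain xs where "xs \<in> S" "u = out xs" by auto
    then show "length u \<le> length ws * Lm"
      using fs_out_len[of f g z xs ws] by (simp add: S_def out_def Lm_def)
  qed
  finally show ?thesis by (simp add: Lm_def)
qed

lemma entry_nonneg: "kraft_prod f g ws $ z $ z' \<ge> 0"
  by (simp add: kraft_prod_entry sum_nonneg)

lemma norm_le_entries:
  assumes "\<And>i j. \<bar>(A::real^'n^'m)$i$j\<bar> \<le> B"
  shows "norm A \<le> real CARD('m) * real CARD('n) * B"
proof -
  have "norm A \<le> (\<Sum>i\<in>UNIV. norm (A$i))" unfolding norm_vec_def[of A] by (rule L2_set_le_sum) simp
  also have "\<dots> \<le> (\<Sum>i\<in>(UNIV::'m set). \<Sum>j\<in>(UNIV::'n set). \<bar>A$i$j\<bar>)"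
    by (intro sum_mono norm_le_l1_cart)
  also have "\<dots> \<le> (\<Sum>i\<in>(UNIV::'m set). \<Sum>j\<in>(UNIV::'n set). B)"
    by (intro sum_mono assms)
  also have "\<dots> = real CARD('m) * real CARD('n) * B" by simp
  finally show ?thesis .
qed

theorem theorem3:
  fixes f :: "'z::finite \<Rightarrow> 'x::finite \<Rightarrow> 'w::finite \<Rightarrow> bool list"
    and g :: "'z \<Rightarrow> 'x \<Rightarrow> 'w \<Rightarrow> 'z"
  assumes "info_lossless_si f g"
  shows "convergent (jsr_seq f g) \<and> jsr f g \<le> 1"
proof -
  define W where "W n = {ws :: 'w list. length ws = n}" for n
  define a where "a n = Max ((\<lambda>ws. norm (kraft_prod f g ws)) ` W n)" for n
  define Lm where "Lm = Max (range (\<lambda>(z,x,w). length (f z x w)))"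
  have fW: "finite (W n)" for n by (simp add: W_def finite_len)
  have neW: "W n \<noteq> {}" for n unfolding W_def by (metis (mono_tags) empty_iff length_replicate mem_Collect_eq)
  have a_ge: "ws \<in> W n \<Longrightarrow> norm (kraft_prod f g ws) \<le> a n" for ws n
    unfolding a_def using fW by (intro Max_ge) auto
  have a_in: "\<exists>ws\<in>W n. a n = norm (kraft_prod f g ws)" for n
  proof -
    have "a n \<in> (\<lambda>ws. norm (kraft_prod f g ws)) ` W n"
      unfolding a_def using fW[of n] neW[of n] by (intro Max_in) auto
    then show ?thesis by auto
  qed
  have nn: "a n \<ge> 0" for n using a_in[of n] by auto
  have sub: "a (m + n) \<le> a m * a n" for m n
  proof -
    obtain ws where ws: "ws \<in> W (m+n)" "a (m+n) = norm (kraft_prod f g ws)" using a_in by blast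
    have "ws = take m ws @ drop m ws" by simp
    then have "kraft_prod f g ws = kraft_prod f g (take m ws) ** kraft_prod f g (drop m ws)"
      by (metis kraft_prod_append)
    then have "a (m+n) \<le> norm (kraft_prod f g (take m ws)) * norm (kraft_prod f g (drop m ws))"
      using ws frob_submult by metis
    also have "\<dots> \<le> a m * a n"
      using ws(1) by (intro mult_mono a_ge) (auto simp: W_def nn)
    finally show ?thesis .
  qed
  have seq: "jsr_seq f g = (\<lambda>n. a n powr (1 / real n))"
  proof
    fix n
    obtain ws0 where ws0: "ws0 \<in> W n" "a n = norm (kraft_prod f g ws0)" using a_in by blast
    have "jsr_seq f g n = Max ((\<lambda>ws. norm (kraft_prod f g ws) powr (1 / real n)) ` W n)"
      by (simp add: jsr_seq_def W_def)
    also have "\<dots> = a n powr (1 / real n)"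
    proof (rule Max_eqI)
      show "finite ((\<lambda>ws. norm (kraft_prod f g ws) powr (1 / real n)) ` W n)" using fW by simp
      show "a n powr (1 / real n) \<in> (\<lambda>ws. norm (kraft_prod f g ws) powr (1 / real n)) ` W n"
        using ws0 by auto
      fix y assume "y \<in> (\<lambda>ws. norm (kraft_prod f g ws) powr (1 / real n)) ` W n"
      then obtain ws where "ws \<in> W n" "y = norm (kraft_prod f g ws) powr (1 / real n)" by auto
      then show "y \<le> a n powr (1 / real n)" using a_ge by (auto intro: powr_mono2)
    qed
    finally show "jsr_seq f g n = a n powr (1 / real n)" .
  qed
  define L where "L = Inf ((\<lambda>n. a n powr (1/real n)) ` {1..})"
  have lim: "jsr_seq f g \<longlonglongrightarrow> L"
    unfolding seq L_def by (rule fekete_root[OF nn sub])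
  define c where "c = real CARD('z) * real CARD('z) * (real Lm + 1)"
  have c0: "c > 0" by (simp add: c_def add_pos_nonneg)
  have abound: "a n \<le> c * (real n + 1)" for n
  proof -
    obtain ws where ws: "ws \<in> W n" "a n = norm (kraft_prod f g ws)" using a_in by blast
    have "\<bar>kraft_prod f g ws $ i $ j\<bar> \<le> real (n * Lm) + 1" for i j
      using entry_bound[OF assms, of ws i j] entry_nonneg[of f g ws i j] ws(1)
      by (simp add: W_def Lm_def)
    then have "a n \<le> real CARD('z) * real CARD('z) * (real (n * Lm) + 1)"
      using ws norm_le_entries by metis
    also have "\<dots> \<le> c * (real n + 1)"
    proof -
      have h: "real (n*Lm) + 1 \<le> (real Lm + 1)*(real n+1)" by (simp add: algebra_simps)
      show ?thesis using mult_left_mono[OF h, of "real CARD('z) * real CARD('z)"]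
        by (simp add: c_def mult.assoc)
    qed
    finally show ?thesis .
  qed
  have "L \<le> 1"
  proof (rule LIMSEQ_le[OF lim lim_root_lin[OF c0]])
    show "\<exists>N. \<forall>n\<ge>N. jsr_seq f g n \<le> (c * (real n + 1)) powr (1 / real n)"
      using abound nn by (auto simp: seq intro!: powr_mono2)
  qed
  moreover have "jsr f g = L" unfolding jsr_def using lim by (rule limI)
  ultimately show ?thesis using lim convergentI by auto
qed

end
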